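(* For complex $a,c$ with $|ac|<1$, \begin{align*} \sum_{n=0}^\infty \bigl(1-q^{2n+1}\bigr) \frac{\bigl(q^2/a, q^2/c; q^2\bigr)_n}{\bigl(q^2 a, q^2c; q^2\bigr)_n} (ac)^n \sum_{j=-n}^n (-1)^j q^{n^2-j^2} =\frac{\bigl(q^2, ac; q^2\bigr)_\infty}{\bigl(q^2 a, q^2 c; q^2\bigr)_\infty}\sum_{n=0}^\infty \frac{\bigl(q^2/a, q^2/c; q^2\bigr)_n}{\bigl(1+q^{2n+1}\bigr)\bigl(q^4; q^4\bigr)_n} (-ac)^n. \end{align*}
   Context: Throughout, $q$ is a complex number with $0<|q|<1$. For $x\in\mathbb{C}$ and base $p\in\{q^2,q^4\}$, $(x;p)_\infty=\prod_{k=0}^\infty(1-xp^k)$ and, for an integer $n\ge 0$, $(x;p)_n=\prod_{k=0}^{n-1}(1-xp^k)$; also $(x_1,\dots,x_m;p)_n=(x_1;p)_n\cdots(x_m;p)_n$ for $n$ an integer or $\infty$. *)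

theory Defs
  imports "HOL-Analysis.Analysis"
begin

definition qpoch :: "complex \<Rightarrow> complex \<Rightarrow> nat \<Rightarrow> complex" where
  "qpoch x p n = (\<Prod>k<n. 1 - x * p ^ k)"

definition qpoch_inf :: "complex \<Rightarrow> complex \<Rightarrow> complex" where
  "qpoch_inf x p = (\<Prod>k. 1 - x * p ^ k)"

end

theory Submission
  imports Defs
begin

definition nz :: "complex \<Rightarrow> complex \<Rightarrow> bool" where
  "nz x p \<longleftrightarrow> (\<forall>k. x * p ^ k \<noteq> 1)"

lemma qpoch_0 [simp]: "qpoch x p 0 = 1"
  by (simp add: qpoch_def)

lemma qpoch_Suc: "qpoch x p (Suc n) = qpoch x p n * (1 - x * p ^ n)"
  by (simp add: qpoch_def)

lemma qpoch_Suc': "qpoch x p (Suc n) = (1 - x) * qpoch (x * p) p n"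
  unfolding qpoch_def by (subst prod.lessThan_Suc_shift) (simp add: mult.assoc)

lemma qpoch_add: "qpoch x p (m + n) = qpoch x p m * qpoch (x * p ^ m) p n"
proof (induction n)
  case 0 then show ?case by simp
next
  case (Suc n)
  then show ?case by (simp add: qpoch_Suc power_add mult.assoc)
qed

lemma nz_shift: "nz x p \<Longrightarrow> nz (x * p ^ m) p"
  unfolding nz_def by (metis mult.assoc power_add)

lemma nz_qpoch: "nz x p \<Longrightarrow> qpoch x p n \<noteq> 0"
  unfolding nz_def qpoch_def by (auto simp: prod_zero_iff)

lemma nz_small: "cmod p < 1 \<Longrightarrow> cmod x < 1 \<Longrightarrow> nz x p"
proof -
  assume p: "cmod p < 1" and x: "cmod x < 1"
  have "cmod (x * p ^ k) < 1" for k
  proof -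
    have "cmod (p ^ k) \<le> 1" by (simp add: norm_power power_le_one p less_imp_le)
    then have "cmod x * cmod (p ^ k) \<le> cmod x" by (simp add: mult_left_le)
    then show ?thesis using x by (simp add: norm_mult)
  qed
  then show ?thesis unfolding nz_def by (metis norm_one less_irrefl)
qed

lemma qpoch_LIMSEQ:
  assumes p: "cmod p < 1" and nz: "nz x p"
  shows "(\<lambda>n. qpoch x p n) \<longlonglongrightarrow> qpoch_inf x p" and "qpoch_inf x p \<noteq> 0"
proof -
  have sm: "summable (\<lambda>k. norm (- x * p ^ k))"
    using p by (simp add: norm_mult norm_power summable_mult)
  have cp: "convergent_prod (\<lambda>k. 1 + (- x * p ^ k))"
    by (rule summable_imp_convergent_prod_complex[OF sm]) (use nz in \<open>auto simp: nz_def\<close>)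
  then have cp': "convergent_prod (\<lambda>k. 1 - x * p ^ k)" by simp
  have "(\<lambda>n. \<Prod>i\<le>n. 1 - x * p ^ i) \<longlonglongrightarrow> qpoch_inf x p"
    unfolding qpoch_inf_def by (rule convergent_prod_LIMSEQ[OF cp'])
  then have "(\<lambda>n. qpoch x p (Suc n)) \<longlonglongrightarrow> qpoch_inf x p"
    by (simp add: qpoch_def lessThan_Suc_atMost)
  then show "(\<lambda>n. qpoch x p n) \<longlonglongrightarrow> qpoch_inf x p"
    using filterlim_sequentially_Suc by blast
  show "qpoch_inf x p \<noteq> 0"
    unfolding qpoch_inf_def
    by (rule prodinf_nonzero[OF cp']) (use nz in \<open>auto simp: nz_def\<close>)
qed

lemma qpoch_inf_split:
  assumes p: "cmod p < 1" and nz: "nz x p"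
  shows "qpoch_inf x p = qpoch x p m * qpoch_inf (x * p ^ m) p"
proof -
  have "(\<lambda>n. qpoch x p (n + m)) \<longlonglongrightarrow> qpoch_inf x p"
    using qpoch_LIMSEQ(1)[OF p nz] by (rule LIMSEQ_ignore_initial_segment)
  moreover have "(\<lambda>n. qpoch x p (n + m)) \<longlonglongrightarrow> qpoch x p m * qpoch_inf (x * p ^ m) p"
    unfolding add.commute[of _ m] qpoch_add
    by (intro tendsto_mult tendsto_const qpoch_LIMSEQ(1)[OF p nz_shift[OF nz]])
  ultimately show ?thesis by (rule LIMSEQ_unique)
qed

lemma qpoch_bound:
  assumes p: "cmod p < 1"
  shows "cmod (qpoch x p n) \<le> exp (cmod x / (1 - cmod p))"
proof -
  have "cmod (qpoch x p n) \<le> (\<Prod>k<n. cmod (1 - x * p ^ k))"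
    unfolding qpoch_def by (simp add: prod_norm)
  also have "\<dots> \<le> (\<Prod>k<n. exp (cmod x * cmod p ^ k))"
  proof (rule prod_mono, safe)
    fix k
    show "0 \<le> cmod (1 - x * p ^ k)" by simp
    have "cmod (1 - x * p ^ k) \<le> 1 + cmod x * cmod p ^ k"
      using norm_triangle_ineq4[of 1 "x * p ^ k"] by (simp add: norm_mult norm_power)
    also have "\<dots> \<le> exp (cmod x * cmod p ^ k)" by (rule exp_ge_add_one_self)
    finally show "cmod (1 - x * p ^ k) \<le> exp (cmod x * cmod p ^ k)" .
  qed
  also have "\<dots> = exp (\<Sum>k<n. cmod x * cmod p ^ k)" by (simp add: exp_sum)
  also have "\<dots> \<le> exp (cmod x / (1 - cmod p))"
  proof -
    have "(\<Sum>k<n. cmod x * cmod p ^ k) = cmod x * (\<Sum>k<n. cmod p ^ k)"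
      by (simp add: sum_distrib_left)
    also have "(\<Sum>k<n. cmod p ^ k) \<le> (\<Sum>k. cmod p ^ k)"
      by (rule sum_le_suminf) (use p in auto)
    also have "(\<Sum>k. cmod p ^ k) = 1 / (1 - cmod p)"
      by (rule suminf_geometric) (use p in auto)
    finally have "(\<Sum>k<n. cmod x * cmod p ^ k) \<le> cmod x * (1 / (1 - cmod p))"
      by (simp add: mult_left_mono)
    then show ?thesis by simp
  qed
  finally show ?thesis .
qed

lemma prod_one_minus_ge:
  fixes t :: "nat \<Rightarrow> real"
  assumes "\<And>k. 0 \<le> t k" "\<And>k. t k \<le> 1"
  shows "1 - (\<Sum>k<n. t k) \<le> (\<Prod>k<n. 1 - t k)"
proof (induction n)
  case 0 then show ?case by simp
next
  case (Suc n)
  have P: "0 \<le> (\<Prod>k<n. 1 - t k)" by (rule prod_nonneg) (use assms in auto)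
  have P1: "(\<Prod>k<n. 1 - t k) \<le> 1" by (rule prod_le_1) (use assms in auto)
  have "1 - (\<Sum>k<Suc n. t k) = (1 - (\<Sum>k<n. t k)) - t n" by simp
  also have "\<dots> \<le> (\<Prod>k<n. 1 - t k) - t n" using Suc by simp
  also have "\<dots> \<le> (\<Prod>k<n. 1 - t k) - t n * (\<Prod>k<n. 1 - t k)"
    using P1 assms(1)[of n] by (simp add: mult_left_le)
  also have "\<dots> = (\<Prod>k<Suc n. 1 - t k)" by (simp add: algebra_simps)
  finally show ?case .
qed

lemma qpoch_lower:
  assumes p: "cmod p < 1" and x: "cmod x \<le> (1 - cmod p) / 2"
  shows "1/2 \<le> cmod (qpoch x p n)"
proof -
  define t where "t k = cmod x * cmod p ^ k" for k
  have t0: "0 \<le> t k" for k by (simp add: t_def)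
  have t1: "t k \<le> 1" for k
  proof -
    have "cmod p ^ k \<le> 1" using p by (simp add: power_le_one)
    then have "t k \<le> cmod x" unfolding t_def by (simp add: mult_left_le)
    also have "\<dots> \<le> 1"
    proof -
      have "2 * cmod x \<le> 1 - cmod p" using x by (simp add: field_simps)
      then show ?thesis using norm_ge_zero[of p] by linarith
    qed
    finally show ?thesis .
  qed
  have "(\<Sum>k<n. t k) \<le> cmod x / (1 - cmod p)"
  proof -
    have "(\<Sum>k<n. t k) = cmod x * (\<Sum>k<n. cmod p ^ k)"
      by (simp add: t_def sum_distrib_left)
    also have "(\<Sum>k<n. cmod p ^ k) \<le> (\<Sum>k. cmod p ^ k)"
      by (rule sum_le_suminf) (use p in auto)
    also have "(\<Sum>k. cmod p ^ k) = 1 / (1 - cmod p)"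
      by (rule suminf_geometric) (use p in auto)
    finally show ?thesis by (simp add: mult_left_mono)
  qed
  also have "\<dots> \<le> 1/2" using x p by (simp add: divide_le_eq)
  finally have "1/2 \<le> 1 - (\<Sum>k<n. t k)" by simp
  also have "\<dots> \<le> (\<Prod>k<n. 1 - t k)" by (rule prod_one_minus_ge[OF t0 t1])
  also have "\<dots> \<le> (\<Prod>k<n. cmod (1 - x * p ^ k))"
  proof (rule prod_mono, safe)
    fix k
    show "0 \<le> 1 - t k" using t1[of k] by simp
    show "1 - t k \<le> cmod (1 - x * p ^ k)"
      using norm_triangle_ineq2[of 1 "x * p ^ k"] by (simp add: t_def norm_mult norm_power)
  qed
  also have "\<dots> = cmod (qpoch x p n)" unfolding qpoch_def by (simp add: prod_norm)
  finally show ?thesis .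
qed

lemma qpoch_inv_bound:
  assumes p: "cmod p < 1" and nz: "nz x p"
  obtains C where "C > 0" "\<And>n. cmod (inverse (qpoch x p n)) \<le> C"
proof -
  have "(\<lambda>n. inverse (qpoch x p n)) \<longlonglongrightarrow> inverse (qpoch_inf x p)"
    by (intro tendsto_inverse qpoch_LIMSEQ[OF p nz])
  then have "Bseq (\<lambda>n. inverse (qpoch x p n))" by (rule convergent_imp_Bseq[OF convergentI])
  then show ?thesis using that unfolding Bseq_def by auto
qed

lemma norm_mult_lt1: "cmod p < 1 \<Longrightarrow> cmod w < 1 \<Longrightarrow> cmod (p * w) < 1"
proof -
  assume a: "cmod p < 1" "cmod w < 1"
  have "cmod p * cmod w \<le> cmod w" using a by (simp add: mult_left_le_one_le)
  then show ?thesis using a by (simp add: norm_mult)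
qed

lemma qbinomial:
  assumes p: "cmod p < 1" and z: "cmod z < 1" and nzb: "nz (b * z) p"
  shows "(\<lambda>k. qpoch b p k * z ^ k / qpoch p p k) sums (qpoch_inf (b * z) p / qpoch_inf z p)"
proof -
  define c where "c k = qpoch b p k / qpoch p p k" for k
  have nzp: "nz p p" by (rule nz_small[OF p p])
  obtain Cp where Cp: "Cp > 0" "\<And>n. cmod (inverse (qpoch p p n)) \<le> Cp"
    using qpoch_inv_bound[OF p nzp] by blast
  define M where "M = exp (cmod b / (1 - cmod p)) * Cp"
  have cM: "cmod (c k) \<le> M" for k
  proof -
    have "cmod (c k) = cmod (qpoch b p k) * cmod (inverse (qpoch p p k))"
      by (simp add: c_def divide_inverse norm_mult)
    also have "\<dots> \<le> exp (cmod b / (1 - cmod p)) * Cp"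
      by (intro mult_mono qpoch_bound[OF p] Cp(2)) auto
    finally show ?thesis by (simp add: M_def)
  qed
  have M0: "0 \<le> M" using cM[of 0] by (meson norm_ge_zero order_trans)
  have termbound: "cmod (c k * w ^ k) \<le> M * cmod w ^ k" for k w
    by (simp add: norm_mult norm_power mult_right_mono cM)
  have summ: "summable (\<lambda>k. c k * w ^ k)" if "cmod w < 1" for w
  proof (rule summable_comparison_test[OF _ summable_mult[OF summable_geometric]])
    show "\<exists>N. \<forall>n\<ge>N. norm (c n * w ^ n) \<le> M * cmod w ^ n" using termbound by blast
  qed (use that in auto)
  define f where "f w = (\<Sum>k. c k * w ^ k)" for w
  have c_Suc: "c (Suc k) * (1 - p ^ Suc k) = c k * (1 - b * p ^ k)" for k
  proof -
    have "qpoch p p k \<noteq> 0" "1 - p * p ^ k \<noteq> 0"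
      using nz_qpoch[OF nzp] nzp by (auto simp: nz_def)
    then show ?thesis by (simp add: c_def qpoch_Suc field_simps)
  qed
  have rel: "(1 - w) * f w = (1 - b * w) * f (p * w)" if w: "cmod w < 1" for w
  proof -
    have pw: "cmod (p * w) < 1"
      by (rule norm_mult_lt1[OF p w])
    define e where "e k = c k * (1 - p ^ k) * w ^ k" for k
    have e0: "e \<longlonglongrightarrow> 0"
    proof (rule Lim_null_comparison)
      show "\<forall>\<^sub>F k in sequentially. norm (e k) \<le> 2 * M * cmod w ^ k"
      proof (rule always_eventually, rule allI)
        fix k
        have "cmod (1 - p ^ k) \<le> 2"
        proof -
          have "cmod (1 - p ^ k) \<le> 1 + cmod (p ^ k)" using norm_triangle_ineq4[of 1 "p ^ k"] by simp
          also have "cmod (p ^ k) \<le> 1" using p by (simp add: norm_power power_le_one)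
          finally show ?thesis by simp
        qed
        then have w2: "cmod w ^ k * cmod (1 - p ^ k) \<le> cmod w ^ k * 2"
          by (intro mult_left_mono) auto
        have "cmod (c k) * (cmod w ^ k * cmod (1 - p ^ k)) \<le> M * (cmod w ^ k * 2)"
          using mult_mono[OF cM[of k] w2 M0] by simp
        then show "norm (e k) \<le> 2 * M * cmod w ^ k"
          unfolding e_def norm_mult norm_power by (simp add: mult_ac)
      qed
      show "(\<lambda>k. 2 * M * cmod w ^ k) \<longlonglongrightarrow> 0"
        using w by (intro tendsto_mult_right_zero LIMSEQ_power_zero) auto
    qed
    have tel: "(\<lambda>k. e k - e (Suc k)) sums (e 0 - 0)" by (rule telescope_sums'[OF e0])
    have eq: "e k - e (Suc k) = (1 - w) * (c k * w ^ k) - (1 - b * w) * (c k * (p * w) ^ k)" for k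
    proof -
      have "e (Suc k) = c k * (1 - b * p ^ k) * w ^ Suc k"
        unfolding e_def using c_Suc[of k] by (simp add: mult_ac)
      then show ?thesis unfolding e_def by (simp add: power_mult_distrib algebra_simps)
    qed
    have "(\<lambda>k. (1 - w) * (c k * w ^ k) - (1 - b * w) * (c k * (p * w) ^ k)) sums
          ((1 - w) * f w - (1 - b * w) * f (p * w))"
      unfolding f_def
      by (intro sums_diff sums_mult summable_sums summ w pw)
    moreover have "(\<lambda>k. (1 - w) * (c k * w ^ k) - (1 - b * w) * (c k * (p * w) ^ k)) sums 0"
      using tel by (simp only: eq) (simp add: e_def)
    ultimately show ?thesis using sums_unique2 by fastforce
  qed
  have iter: "f w * qpoch w p N = qpoch (b * w) p N * f (p ^ N * w)" if "cmod w < 1" for N w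
    using that
  proof (induction N arbitrary: w)
    case 0 then show ?case by simp
  next
    case (Suc N)
    have pw: "cmod (p * w) < 1"
      by (rule norm_mult_lt1[OF p Suc.prems])
    have "f w * qpoch w p (Suc N) = ((1 - w) * f w) * qpoch (w * p) p N"
      by (simp add: qpoch_Suc')
    also have "\<dots> = (1 - b * w) * (f (p * w) * qpoch (p * w) p N)"
      using rel[OF Suc.prems] by (simp add: mult.commute)
    also have "\<dots> = (1 - b * w) * (qpoch (b * (p * w)) p N * f (p ^ N * (p * w)))"
      using Suc.IH[OF pw] by simp
    also have "\<dots> = qpoch (b * w) p (Suc N) * f (p ^ Suc N * w)"
      by (simp add: qpoch_Suc' mult_ac)
    finally show ?case .
  qed
  have lim0: "(\<lambda>N. f (p ^ N * z)) \<longlonglongrightarrow> 1"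
  proof -
    have "(\<lambda>N. \<Sum>k. c k * (p ^ N * z) ^ k) \<longlonglongrightarrow> (\<Sum>k. c k * 0 ^ k)"
    proof (rule tannerys_theorem[where M = "\<lambda>k. M * cmod z ^ k", THEN conjunct2, THEN conjunct2])
      show "((\<lambda>N. c k * (p ^ N * z) ^ k) \<longlonglongrightarrow> c k * 0 ^ k)" for k
      proof -
        have "(\<lambda>N. p ^ N * z) \<longlonglongrightarrow> 0 * z"
          using p by (intro tendsto_mult LIMSEQ_power_zero tendsto_const) auto
        then show ?thesis by (intro tendsto_mult tendsto_power tendsto_const) auto
      qed
      show "\<forall>\<^sub>F (k, N) in sequentially \<times>\<^sub>F sequentially. norm (c k * (p ^ N * z) ^ k) \<le> M * cmod z ^ k"
      proof (rule always_eventually, clarify)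
        fix k N
        have "cmod (p ^ N * z) \<le> cmod z"
          using p by (simp add: norm_mult norm_power power_le_one mult_left_le_one_le)
        then have "cmod (p ^ N * z) ^ k \<le> cmod z ^ k" by (simp add: power_mono)
        then show "norm (c k * (p ^ N * z) ^ k) \<le> M * cmod z ^ k"
          using termbound[of k "p ^ N * z"] M0 by (meson mult_left_mono order_trans)
      qed
      show "summable (\<lambda>k. M * cmod z ^ k)" using z by (simp add: summable_mult)
    qed auto
    moreover have "(\<Sum>k. c k * 0 ^ k) = 1"
    proof -
      have "(\<lambda>k. c k * 0 ^ k) sums (\<Sum>k<1. c k * 0 ^ k)"
        by (rule sums_finite) auto
      then show ?thesis by (simp add: sums_iff c_def)
    qed
    ultimately show ?thesis by (simp add: f_def)
  qed
  have "(\<lambda>N. f z * qpoch z p N) \<longlonglongrightarrow> f z * qpoch_inf z p"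
    by (intro tendsto_mult tendsto_const qpoch_LIMSEQ(1)[OF p nz_small[OF p z]])
  moreover have "(\<lambda>N. f z * qpoch z p N) \<longlonglongrightarrow> qpoch_inf (b * z) p * 1"
    unfolding iter[OF z]
    by (intro tendsto_mult lim0 qpoch_LIMSEQ(1)[OF p nzb])
  ultimately have "f z * qpoch_inf z p = qpoch_inf (b * z) p" using LIMSEQ_unique by fastforce
  then have "f z = qpoch_inf (b * z) p / qpoch_inf z p"
    using qpoch_LIMSEQ(2)[OF p nz_small[OF p z]] by (simp add: field_simps)
  moreover have "(\<lambda>k. c k * z ^ k) sums f z" unfolding f_def by (rule summable_sums[OF summ[OF z]])
  ultimately show ?thesis by (simp add: c_def)
qed

lemma qpoch_zero [simp]: "qpoch 0 p k = 1"
  by (simp add: qpoch_def)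

lemma qpoch_tendsto:
  assumes "(f \<longlongrightarrow> L) F"
  shows "((\<lambda>N. qpoch (f N) p k) \<longlongrightarrow> qpoch L p k) F"
  unfolding qpoch_def by (intro tendsto_prod tendsto_diff tendsto_mult tendsto_const assms)

lemma qpoch_bound':
  assumes p: "cmod p < 1" and "cmod x \<le> r"
  shows "cmod (qpoch x p n) \<le> exp (r / (1 - cmod p))"
proof -
  have "cmod (qpoch x p n) \<le> exp (cmod x / (1 - cmod p))" by (rule qpoch_bound[OF p])
  also have "\<dots> \<le> exp (r / (1 - cmod p))"
    using assms by (simp add: divide_right_mono)
  finally show ?thesis .
qed

lemma aux_e4:
  fixes a Am Bm Pm Gm u1 u2 u3 u4 z zm :: complex
  shows "Pm \<noteq> 0 \<Longrightarrow> Gm \<noteq> 0 \<Longrightarrow> u3 \<noteq> 0 \<Longrightarrow> u4 \<noteq> 0 \<Longrightarrow>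
    a * (Am * u1) * (Bm * u2) * (zm * z) * u4 / ((Pm * u4) * (Gm * u3)) = a * (Am*Bm*zm/(Pm*Gm)) * u1 * u2 * z / u3"
  by (simp add: field_simps)

lemma qgauss:
  fixes \<alpha> \<beta> z p :: complex
  assumes p: "cmod p < 1" and z: "cmod z < 1"
    and nzg: "nz (\<alpha> * \<beta> * z) p" and nza: "nz (\<alpha> * z) p" and nzb: "nz (\<beta> * z) p"
  shows "(\<lambda>k. qpoch \<alpha> p k * qpoch \<beta> p k * z ^ k / (qpoch p p k * qpoch (\<alpha> * \<beta> * z) p k))
           sums (qpoch_inf (\<alpha> * z) p * qpoch_inf (\<beta> * z) p / (qpoch_inf (\<alpha> * \<beta> * z) p * qpoch_inf z p))"
proof -
  define t where "t a k = qpoch a p k * qpoch \<beta> p k * z ^ k / (qpoch p p k * qpoch (a * \<beta> * z) p k)" for a k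
  define G where "G a = (\<Sum>k. t a k)" for a
  have nzp: "nz p p" by (rule nz_small[OF p p])
  obtain Cp where Cp: "Cp > 0" "\<And>n. cmod (inverse (qpoch p p n)) \<le> Cp"
    using qpoch_inv_bound[OF p nzp] by blast
  define Eb where "Eb = exp (cmod \<beta> / (1 - cmod p))"
  have Eb: "cmod (qpoch \<beta> p k) \<le> Eb" for k unfolding Eb_def by (rule qpoch_bound[OF p])
  have Eb0: "0 \<le> Eb" by (simp add: Eb_def)
  have Cp0: "0 \<le> Cp" using Cp(1) by simp
  have nzP: "nz (a * p * \<beta> * z) p" if "nz (a * \<beta> * z) p" for a
    using nz_shift[OF that, of 1] by (simp add: mult_ac)
  have summ: "summable (t a)" if nza': "nz (a * \<beta> * z) p" for a
  proof -
    obtain Ca where Ca: "Ca > 0" "\<And>n. cmod (inverse (qpoch (a * \<beta> * z) p n)) \<le> Ca"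
      using qpoch_inv_bound[OF p nza'] by blast
    define Ea where "Ea = exp (cmod a / (1 - cmod p))"
    have "cmod (t a k) \<le> (Ea * Eb * Cp * Ca) * cmod z ^ k" for k
    proof -
      have "cmod (t a k) = cmod (qpoch a p k) * cmod (qpoch \<beta> p k) * cmod z ^ k *
             (cmod (inverse (qpoch p p k)) * cmod (inverse (qpoch (a * \<beta> * z) p k)))"
        by (simp add: t_def norm_mult norm_divide norm_power divide_inverse norm_inverse)
      also have "\<dots> \<le> Ea * Eb * cmod z ^ k * (Cp * Ca)"
        by (intro mult_mono Cp(2) Ca(2) Eb) (auto simp: Ea_def Eb0 Cp0 intro: qpoch_bound[OF p])
      finally show ?thesis by (simp add: mult_ac)
    qed
    then show ?thesis
      by (intro summable_comparison_test[OF _ summable_mult[OF summable_geometric[of "cmod z"]]])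
         (use z in auto)
  qed
  have rel: "(1 - a * \<beta> * z) * G a = (1 - a * z) * G (a * p)" if nza': "nz (a * \<beta> * z) p" for a
  proof -
    define \<gamma> where "\<gamma> = a * \<beta> * z"
    have nzg': "nz \<gamma> p" using nza' by (simp add: \<gamma>_def)
    have nzgp: "nz (\<gamma> * p) p" using nz_shift[OF nzg', of 1] by simp
    have g1: "1 - \<gamma> \<noteq> 0" using nzg' unfolding nz_def by (metis mult.right_neutral power_0 right_minus_eq)
    define d where "d k = a * qpoch (a * p) p (k - 1) * qpoch \<beta> p k * z ^ k * (1 - p ^ k) /
                          (qpoch p p k * qpoch (\<gamma> * p) p (k - 1))" for k
    have step: "(1 - \<gamma>) * t a k - (1 - a * z) * t (a * p) k = d (Suc k) - d k" for k
    proof (cases k)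
      case 0
      have "1 - p \<noteq> 0" using nzp unfolding nz_def by (metis power_one_right right_minus_eq mult.commute power_Suc power_0 mult.right_neutral)
      then show ?thesis using 0 g1 by (simp add: t_def d_def qpoch_Suc field_simps \<gamma>_def)
    next
      case (Suc m)
      define P where "P = p ^ Suc m"
      define X where "X = qpoch (a * p) p m * qpoch \<beta> p (Suc m) * z ^ Suc m /
                          (qpoch p p (Suc m) * qpoch (\<gamma> * p) p m)"
      have n1: "qpoch p p (Suc m) \<noteq> 0" by (rule nz_qpoch[OF nzp])
      have n2: "qpoch (\<gamma> * p) p m \<noteq> 0" by (rule nz_qpoch[OF nzgp])
      have n3: "1 - \<gamma> * P \<noteq> 0" using nzg' unfolding nz_def P_def by (metis right_minus_eq)
      have n4: "1 - p * P \<noteq> 0" using nzp unfolding nz_def P_def by (metis right_minus_eq power_Suc)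
      have e1: "(1 - \<gamma>) * t a (Suc m) = (1 - a) * X"
        using g1 n1 n2 unfolding t_def X_def \<gamma>_def[symmetric]
        by (simp add: qpoch_Suc'[of a] qpoch_Suc'[of \<gamma>] field_simps)
      have e2: "t (a * p) (Suc m) = X * (1 - a * P) / (1 - \<gamma> * P)"
      proof -
        have eq: "a * p * \<beta> * z = \<gamma> * p" by (simp add: \<gamma>_def mult_ac)
        have "t (a * p) (Suc m) = (qpoch (a * p) p m * (1 - a * P)) * qpoch \<beta> p (Suc m) * z ^ Suc m /
               (qpoch p p (Suc m) * (qpoch (\<gamma> * p) p m * (1 - \<gamma> * P)))"
          unfolding t_def eq qpoch_Suc[of "a * p" p m] qpoch_Suc[of "\<gamma> * p" p m] P_def
          by (simp add: mult_ac)
        also have "\<dots> = X * (1 - a * P) / (1 - \<gamma> * P)"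
          unfolding X_def using n1 n2 n3 by (simp add: field_simps)
        finally show ?thesis .
      qed
      have e3: "d (Suc m) = a * X * (1 - P)"
        unfolding d_def X_def P_def by simp
      have e4: "d (Suc (Suc m)) = a * X * (1 - a * P) * (1 - \<beta> * P) * z / (1 - \<gamma> * P)"
      proof -
        have "d (Suc (Suc m)) = a * (qpoch (a * p) p m * (1 - a * P)) * (qpoch \<beta> p (Suc m) * (1 - \<beta> * P))
               * (z ^ Suc m * z) * (1 - p * P) /
               ((qpoch p p (Suc m) * (1 - p * P)) * (qpoch (\<gamma> * p) p m * (1 - \<gamma> * P)))"
          unfolding d_def diff_Suc_1 qpoch_Suc[of "a * p" p m] qpoch_Suc[of "\<gamma> * p" p m]
            qpoch_Suc[of \<beta> p "Suc m"] qpoch_Suc[of p p "Suc m"] P_def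
          by (simp add: mult_ac)
        also have "\<dots> = a * X * (1 - a * P) * (1 - \<beta> * P) * z / (1 - \<gamma> * P)"
          unfolding X_def by (rule aux_e4[OF n1 n2 n3 n4])
        finally show ?thesis .
      qed
      have "(1 - a) * X - (1 - a * z) * (X * (1 - a * P) / (1 - \<gamma> * P))
            = a * X * (1 - a * P) * (1 - \<beta> * P) * z / (1 - \<gamma> * P) - a * X * (1 - P)"
        using n3 by (simp add: field_simps \<gamma>_def)
      then show ?thesis using Suc e1 e2 e3 e4 by simp
    qed
    have d0: "d \<longlonglongrightarrow> 0"
    proof -
      obtain Cg where Cg: "Cg > 0" "\<And>n. cmod (inverse (qpoch (\<gamma> * p) p n)) \<le> Cg"
        using qpoch_inv_bound[OF p nzgp] by blast
      define Ea where "Ea = exp (cmod (a * p) / (1 - cmod p))"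
      have Ea: "cmod (qpoch (a * p) p k) \<le> Ea" for k unfolding Ea_def by (rule qpoch_bound[OF p])
      show ?thesis
      proof (rule Lim_null_comparison)
        show "\<forall>\<^sub>F k in sequentially. norm (d k) \<le> (cmod a * Ea * Eb * 2 * Cp * Cg) * cmod z ^ k"
        proof (rule always_eventually, rule allI)
          fix k
          have t2: "cmod (1 - p ^ k) \<le> 2"
          proof -
            have "cmod (1 - p ^ k) \<le> 1 + cmod (p ^ k)" using norm_triangle_ineq4[of 1 "p ^ k"] by simp
            also have "cmod (p ^ k) \<le> 1" using p by (simp add: norm_power power_le_one)
            finally show ?thesis by simp
          qed
          have "norm (d k) = cmod a * cmod (qpoch (a * p) p (k - 1)) * cmod (qpoch \<beta> p k) *
                 cmod (1 - p ^ k) * (cmod (inverse (qpoch p p k)) * cmod (inverse (qpoch (\<gamma> * p) p (k - 1)))) * cmod z ^ k"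
            by (simp add: d_def norm_mult norm_divide norm_power divide_inverse norm_inverse mult_ac)
          also have "\<dots> \<le> cmod a * Ea * Eb * 2 * (Cp * Cg) * cmod z ^ k"
            using Cg(1) by (intro mult_mono mult_left_mono Ea Eb t2 Cp(2) Cg(2)) (auto simp: Ea_def Eb0 Cp0)
          finally show "norm (d k) \<le> (cmod a * Ea * Eb * 2 * Cp * Cg) * cmod z ^ k" by (simp add: mult_ac)
        qed
        show "(\<lambda>k. (cmod a * Ea * Eb * 2 * Cp * Cg) * cmod z ^ k) \<longlonglongrightarrow> 0"
          using z by (intro tendsto_mult_right_zero LIMSEQ_power_zero) auto
      qed
    qed
    have "(\<lambda>k. d (Suc k) - d k) sums (0 - d 0)" by (rule telescope_sums[OF d0])
    then have "(\<lambda>k. (1 - \<gamma>) * t a k - (1 - a * z) * t (a * p) k) sums 0"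
      by (simp add: step d_def)
    moreover have "(\<lambda>k. (1 - \<gamma>) * t a k - (1 - a * z) * t (a * p) k) sums
                   ((1 - \<gamma>) * G a - (1 - a * z) * G (a * p))"
      unfolding G_def
      by (intro sums_diff sums_mult summable_sums summ nza' nzP)
    ultimately show ?thesis using sums_unique2 by (fastforce simp: \<gamma>_def)
  qed
  have iter: "G a * qpoch (a * \<beta> * z) p N = qpoch (a * z) p N * G (a * p ^ N)"
    if "nz (a * \<beta> * z) p" for N a
    using that
  proof (induction N arbitrary: a)
    case 0 then show ?case by simp
  next
    case (Suc N)
    have "G a * qpoch (a * \<beta> * z) p (Suc N) = ((1 - a * \<beta> * z) * G a) * qpoch (a * p * \<beta> * z) p N"
      by (simp add: qpoch_Suc' mult_ac)
    also have "\<dots> = (1 - a * z) * (G (a * p) * qpoch (a * p * \<beta> * z) p N)"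
      using rel[OF Suc.prems] by simp
    also have "\<dots> = (1 - a * z) * (qpoch (a * p * z) p N * G (a * p * p ^ N))"
      using Suc.IH[OF nzP[OF Suc.prems]] by simp
    also have "\<dots> = qpoch (a * z) p (Suc N) * G (a * p ^ Suc N)"
      by (simp add: qpoch_Suc' mult_ac)
    finally show ?case .
  qed
  have nzN: "nz (\<alpha> * p ^ N * \<beta> * z) p" for N
    using nz_shift[OF nzg, of N] by (simp add: mult_ac)
  have lim0: "(\<lambda>N. G (\<alpha> * p ^ N)) \<longlonglongrightarrow> G 0"
  proof -
    have pN: "(\<lambda>N. p ^ N) \<longlonglongrightarrow> 0" using p by (intro LIMSEQ_power_zero) auto
    define r where "r = (1 - cmod p) / 2"
    have r0: "r > 0" using p by (simp add: r_def)
    have "(\<lambda>N. \<alpha> * \<beta> * z * p ^ N) \<longlonglongrightarrow> \<alpha> * \<beta> * z * 0"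
      by (intro tendsto_mult tendsto_const pN)
    then have "\<forall>\<^sub>F N in sequentially. cmod (\<alpha> * \<beta> * z * p ^ N) < r"
      using r0 by (simp add: tendsto_iff dist_norm) 
    then obtain N0 where N0: "\<And>N. N \<ge> N0 \<Longrightarrow> cmod (\<alpha> * \<beta> * z * p ^ N) < r"
      by (auto simp: eventually_sequentially)
    define Ea where "Ea = exp (cmod \<alpha> / (1 - cmod p))"
    have "(\<lambda>N. \<Sum>k. t (\<alpha> * p ^ N) k) \<longlonglongrightarrow> (\<Sum>k. t 0 k)"
    proof (rule tannerys_theorem[where M = "\<lambda>k. (Ea * Eb * Cp * 2) * cmod z ^ k", THEN conjunct2, THEN conjunct2])
      show "(\<lambda>N. t (\<alpha> * p ^ N) k) \<longlonglongrightarrow> t 0 k" for k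
      proof -
        have a0: "(\<lambda>N. \<alpha> * p ^ N) \<longlonglongrightarrow> 0" using tendsto_mult_right_zero[OF pN, of \<alpha>] by simp
        have a1: "(\<lambda>N. \<alpha> * p ^ N * \<beta> * z) \<longlonglongrightarrow> 0"
          using tendsto_mult_left_zero[OF tendsto_mult_left_zero[OF a0, of \<beta>], of z] by simp
        show ?thesis unfolding t_def
          by (intro tendsto_divide tendsto_mult tendsto_const qpoch_tendsto a0 a1) (simp_all add: nz_qpoch[OF nzp])
      qed
      show "\<forall>\<^sub>F (k, N) in sequentially \<times>\<^sub>F sequentially. norm (t (\<alpha> * p ^ N) k) \<le> (Ea * Eb * Cp * 2) * cmod z ^ k"
        unfolding eventually_prod_filter
      proof (intro exI conjI allI impI)
        show "eventually (\<lambda>_. True) sequentially" by simp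
        show "eventually (\<lambda>N. N \<ge> N0) sequentially" by (simp add: eventually_ge_at_top)
        fix k N :: nat
        assume "True" "N \<ge> N0"
        then have small: "cmod (\<alpha> * p ^ N * \<beta> * z) \<le> (1 - cmod p) / 2"
          using N0[of N] by (simp add: r_def mult_ac)
        have low: "cmod (inverse (qpoch (\<alpha> * p ^ N * \<beta> * z) p k)) \<le> 2"
        proof -
          have h: "1/2 \<le> cmod (qpoch (\<alpha> * p ^ N * \<beta> * z) p k)" by (rule qpoch_lower[OF p small])
          have "inverse (cmod (qpoch (\<alpha> * p ^ N * \<beta> * z) p k)) \<le> inverse (1/2)"
            by (rule le_imp_inverse_le[OF h]) simp
          then show ?thesis by (simp add: norm_inverse)
        qed
        have up: "cmod (qpoch (\<alpha> * p ^ N) p k) \<le> Ea"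
          unfolding Ea_def
        proof (rule qpoch_bound'[OF p])
          show "cmod (\<alpha> * p ^ N) \<le> cmod \<alpha>"
            using p by (simp add: norm_mult norm_power power_le_one mult_left_le)
        qed
        have "norm (t (\<alpha> * p ^ N) k) = cmod (qpoch (\<alpha> * p ^ N) p k) * cmod (qpoch \<beta> p k) *
               (cmod (inverse (qpoch p p k)) * cmod (inverse (qpoch (\<alpha> * p ^ N * \<beta> * z) p k))) * cmod z ^ k"
          by (simp add: t_def norm_mult norm_divide norm_power divide_inverse norm_inverse mult_ac)
        also have "\<dots> \<le> Ea * Eb * (Cp * 2) * cmod z ^ k"
          by (intro mult_mono up Eb Cp(2) low) (auto simp: Ea_def Eb0 Cp0)
        finally have "norm (t (\<alpha> * p ^ N) k) \<le> (Ea * Eb * Cp * 2) * cmod z ^ k" by (simp add: mult_ac)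
        then show "(\<lambda>(k, N). norm (t (\<alpha> * p ^ N) k) \<le> (Ea * Eb * Cp * 2) * cmod z ^ k) (k, N)" by simp
      qed
      show "summable (\<lambda>k. (Ea * Eb * Cp * 2) * cmod z ^ k)" using z by (simp add: summable_mult)
    qed auto
    then show ?thesis by (simp add: G_def)
  qed
  have G0: "G 0 = qpoch_inf (\<beta> * z) p / qpoch_inf z p"
  proof -
    have "(\<lambda>k. qpoch \<beta> p k * z ^ k / qpoch p p k) sums (qpoch_inf (\<beta> * z) p / qpoch_inf z p)"
      by (rule qbinomial[OF p z nzb])
    then show ?thesis unfolding G_def t_def by (simp add: sums_iff)
  qed
  have "(\<lambda>N. G \<alpha> * qpoch (\<alpha> * \<beta> * z) p N) \<longlonglongrightarrow> G \<alpha> * qpoch_inf (\<alpha> * \<beta> * z) p"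
    by (intro tendsto_mult tendsto_const qpoch_LIMSEQ(1)[OF p nzg])
  moreover have "(\<lambda>N. G \<alpha> * qpoch (\<alpha> * \<beta> * z) p N) \<longlonglongrightarrow> qpoch_inf (\<alpha> * z) p * G 0"
    unfolding iter[OF nzg] by (intro tendsto_mult lim0 qpoch_LIMSEQ(1)[OF p nza])
  ultimately have "G \<alpha> * qpoch_inf (\<alpha> * \<beta> * z) p = qpoch_inf (\<alpha> * z) p * G 0"
    using LIMSEQ_unique by blast
  then have "G \<alpha> = qpoch_inf (\<alpha> * z) p * qpoch_inf (\<beta> * z) p / (qpoch_inf (\<alpha> * \<beta> * z) p * qpoch_inf z p)"
    using qpoch_LIMSEQ(2)[OF p nzg] qpoch_LIMSEQ(2)[OF p nz_small[OF p z]] by (simp add: G0 field_simps)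
  moreover have "t \<alpha> sums G \<alpha>" unfolding G_def by (rule summable_sums[OF summ[OF nzg]])
  ultimately show ?thesis by (simp add: t_def[abs_def])
qed

definition PP :: "complex \<Rightarrow> nat \<Rightarrow> complex" where
  "PP q m = qpoch (q^2) (q^2) m"

lemma PP_0 [simp]: "PP q 0 = 1" by (simp add: PP_def)

lemma PP_Suc: "PP q (Suc m) = PP q m * (1 - q ^ (2 * m + 2))"
  by (simp add: PP_def qpoch_Suc power_mult[symmetric] power_add[symmetric] mult_ac)

lemma pow_ne1: "cmod q < 1 \<Longrightarrow> k \<ge> 1 \<Longrightarrow> q ^ k \<noteq> 1"
proof -
  assume q: "cmod q < 1" and k: "k \<ge> 1"
  have "cmod (q ^ k) < 1"
  proof -
    have "cmod q ^ k \<le> cmod q ^ 1" using q k by (intro power_decreasing) auto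
    then show ?thesis using q by (simp add: norm_power)
  qed
  then show ?thesis by auto
qed

lemma pow_ne_m1: "cmod q < 1 \<Longrightarrow> k \<ge> 1 \<Longrightarrow> 1 + q ^ k \<noteq> 0"
proof -
  assume q: "cmod q < 1" and k: "k \<ge> 1"
  have "cmod q ^ k \<le> cmod q ^ 1" using q k by (intro power_decreasing) auto
  then have "cmod (q ^ k) < 1" using q by (simp add: norm_power)
  then show ?thesis by (metis add_eq_0_iff norm_minus_cancel norm_one less_irrefl)
qed

lemma PP_nz: "cmod q < 1 \<Longrightarrow> PP q m \<noteq> 0"
proof (induction m)
  case 0 then show ?case by simp
next
  case (Suc m)
  then show ?case using pow_ne1[of q "2 * m + 2"] by (simp add: PP_Suc)
qed

lemma aux_cancel: "(P::complex) \<noteq> 0 \<Longrightarrow> a \<noteq> 0 \<Longrightarrow> b \<noteq> 0 \<Longrightarrow> a / (P * (a * b)) = 1 / (P * b)"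
  by simp

lemma U_aux0:
  fixes X Pd Pe a b c :: complex
  assumes "Pd \<noteq> 0" "Pe \<noteq> 0" "a \<noteq> 0" "b \<noteq> 0" "c \<noteq> 0" "(1 - X) * c + X * a = b"
  shows "(1 - X) / ((Pd * a) * (Pe * b)) + X * (1 / (Pd * (Pe * b) * c)) = 1 / ((Pd * a) * Pe * c)"
proof -
  have "(1 - X) / ((Pd * a) * (Pe * b)) + X * (1 / (Pd * (Pe * b) * c)) = ((1 - X) * c + X * a) / (Pd * a * Pe * b * c)"
    using assms(1-5) by (simp add: field_simps)
  also have "\<dots> = 1 / ((Pd * a) * Pe * c)" using assms by (simp add: field_simps)
  finally show ?thesis .
qed

lemma U_aux:
  fixes X Y Pd Pe :: complex
  assumes "Pd \<noteq> 0" "Pe \<noteq> 0" "1 - Y \<noteq> 0" "1 - X * X * Y \<noteq> 0" "1 + X * Y \<noteq> 0"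
  shows "(1 - X) / ((Pd * (1 - Y)) * (Pe * (1 - X * X * Y))) + X * (1 / (Pd * (Pe * (1 - X * X * Y)) * (1 + X * Y)))
         = 1 / ((Pd * (1 - Y)) * Pe * (1 + X * Y))"
  by (rule U_aux0[OF assms]) (simp add: algebra_simps)

lemma U_sum:
  fixes q :: complex
  assumes q: "cmod q < 1"
  shows "(\<Sum>r = m..m + d. (1 - q ^ (2 * r + 1)) * q ^ (r\<^sup>2 - m\<^sup>2) / (PP q (m + d - r) * PP q (m + d + r + 1)))
         = 1 / (PP q d * PP q (2 * m + d) * (1 + q ^ (2 * (m + d) + 1)))"
  using q
proof (induction d arbitrary: m)
  case 0
  define X where "X = q ^ (2 * m + 1)"
  have idx: "m + 0 + m + 1 = Suc (2 * m)" by simp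
  have ex: "q ^ (2 * (2 * m) + 2) = X * X"
    unfolding X_def power_add[symmetric] by (rule arg_cong[where f="power q"]) simp
  have PPe: "PP q (m + 0 + m + 1) = PP q (2 * m) * (1 - X * X)"
    unfolding idx PP_Suc ex ..
  have n1: "1 - X \<noteq> 0" using pow_ne1[OF 0, of "2 * m + 1"] by (simp add: X_def)
  have n2: "1 + X \<noteq> 0" using pow_ne_m1[OF 0, of "2 * m + 1"] by (simp add: X_def)
  have n0: "PP q (2 * m) \<noteq> 0" by (rule PP_nz[OF 0])
  have "(\<Sum>r = m..m + 0. (1 - q ^ (2 * r + 1)) * q ^ (r\<^sup>2 - m\<^sup>2) / (PP q (m + 0 - r) * PP q (m + 0 + r + 1)))
        = (1 - q ^ (2 * m + 1)) * q ^ (m\<^sup>2 - m\<^sup>2) / (PP q (m + 0 - m) * PP q (m + 0 + m + 1))"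
    by simp
  also have "\<dots> = (1 - X) / (PP q (2 * m) * (1 - X * X))"
    unfolding PPe X_def[symmetric] by simp
  also have "\<dots> = (1 - X) / (PP q (2 * m) * ((1 - X) * (1 + X)))"
    by (simp add: algebra_simps)
  also have "\<dots> = 1 / (PP q (2 * m) * (1 + X))"
    by (rule aux_cancel[OF n0 n1 n2])
  also have "\<dots> = 1 / (PP q 0 * PP q (2 * m + 0) * (1 + q ^ (2 * (m + 0) + 1)))"
    by (simp add: X_def)
  finally show ?case .
next
  case (Suc d)
  define f where "f r = (1 - q ^ (2 * r + 1)) * q ^ (r\<^sup>2 - m\<^sup>2) / (PP q (m + Suc d - r) * PP q (m + Suc d + r + 1))" for r
  have "(\<Sum>r = m..m + Suc d. f r) = f m + (\<Sum>r = Suc m..m + Suc d. f r)"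
    by (rule sum.atLeast_Suc_atMost) simp
  also have "(\<Sum>r = Suc m..m + Suc d. f r) =
      q ^ (2 * m + 1) * (\<Sum>r = Suc m..Suc m + d. (1 - q ^ (2 * r + 1)) * q ^ (r\<^sup>2 - (Suc m)\<^sup>2) / (PP q (Suc m + d - r) * PP q (Suc m + d + r + 1)))"
    unfolding sum_distrib_left
  proof (rule sum.cong)
    fix r assume r: "r \<in> {Suc m..Suc m + d}"
    then have "r\<^sup>2 - m\<^sup>2 = (2 * m + 1) + (r\<^sup>2 - (Suc m)\<^sup>2)"
    proof -
      have "(Suc m)\<^sup>2 \<le> r\<^sup>2" using r by (simp add: power_mono)
      moreover have "(Suc m)\<^sup>2 = m\<^sup>2 + (2 * m + 1)" by (simp add: power2_eq_square)
      ultimately show ?thesis by simp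
    qed
    then show "f r = q ^ (2 * m + 1) * ((1 - q ^ (2 * r + 1)) * q ^ (r\<^sup>2 - (Suc m)\<^sup>2) / (PP q (Suc m + d - r) * PP q (Suc m + d + r + 1)))"
      unfolding f_def by (simp add: power_add)
  qed simp
  also have "\<dots> = q ^ (2 * m + 1) * (1 / (PP q d * PP q (2 * Suc m + d) * (1 + q ^ (2 * (Suc m + d) + 1))))"
    unfolding Suc.IH[of "Suc m", OF Suc.prems] ..
  finally have eq: "(\<Sum>r = m..m + Suc d. f r) = f m + q ^ (2 * m + 1) * (1 / (PP q d * PP q (2 * Suc m + d) * (1 + q ^ (2 * (Suc m + d) + 1))))" .
  define X where "X = q ^ (2 * m + 1)"
  define Y where "Y = q ^ (2 * d + 2)"
  have idx1: "m + Suc d + m + 1 = Suc (2 * m + Suc d)" by simp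
  have idx2: "2 * Suc m + d = Suc (2 * m + Suc d)" by simp
  have ex1: "q ^ (2 * (2 * m + Suc d) + 2) = X * X * Y"
    unfolding X_def Y_def power_add[symmetric] by (rule arg_cong[where f="power q"]) simp
  have e1: "PP q (m + Suc d + m + 1) = PP q (2 * m + Suc d) * (1 - X * X * Y)"
    unfolding idx1 PP_Suc ex1 ..
  have e2: "PP q (2 * Suc m + d) = PP q (2 * m + Suc d) * (1 - X * X * Y)"
    unfolding idx2 PP_Suc ex1 ..
  have e3: "q ^ (2 * (Suc m + d) + 1) = X * Y"
    unfolding X_def Y_def power_add[symmetric] by (rule arg_cong[where f="power q"]) simp
  have e4: "PP q (Suc d) = PP q d * (1 - Y)" by (simp add: PP_Suc Y_def)
  have fm: "f m = (1 - X) / ((PP q d * (1 - Y)) * (PP q (2 * m + Suc d) * (1 - X * X * Y)))"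
    unfolding f_def e1 by (simp add: X_def e4)
  have n1: "1 - Y \<noteq> 0" using pow_ne1[OF q, of "2 * d + 2"] by (simp add: Y_def)
  have n2: "1 - X * X * Y \<noteq> 0"
    unfolding ex1[symmetric] using pow_ne1[OF q, of "2 * (2 * m + Suc d) + 2"] by simp
  have n3: "1 + X * Y \<noteq> 0"
    unfolding e3[symmetric] using pow_ne_m1[OF q, of "2 * (Suc m + d) + 1"] by simp
  have "(\<Sum>r = m..m + Suc d. f r) = 1 / ((PP q d * (1 - Y)) * PP q (2 * m + Suc d) * (1 + X * Y))"
    unfolding eq fm e2 e3 X_def[symmetric]
    by (rule U_aux[OF PP_nz[OF q] PP_nz[OF q] n1 n2 n3])
  also have "\<dots> = 1 / (PP q (Suc d) * PP q (2 * m + Suc d) * (1 + q ^ (2 * (m + Suc d) + 1)))"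
  proof -
    have "2 * (m + Suc d) + 1 = 2 * (Suc m + d) + 1" by simp
    then have e5: "q ^ (2 * (m + Suc d) + 1) = X * Y" using e3 by simp
    show ?thesis unfolding e5 e4 ..
  qed
  finally show ?case by (simp add: f_def)
qed

definition hh :: "complex \<Rightarrow> nat \<Rightarrow> complex" where
  "hh q N = (\<Sum>k\<le>N. (-1) ^ k / (PP q k * PP q (N - k)))"

lemma PP_Suc_inv:
  assumes q: "cmod q < 1"
  shows "(1 - q ^ (2 * k + 2)) / (PP q (Suc k) * R) = 1 / (PP q k * R)"
proof -
  have "1 - q ^ (2 * k + 2) \<noteq> 0" using pow_ne1[OF q, of "2 * k + 2"] by simp
  then show ?thesis by (simp add: PP_Suc)
qed

lemma hh_rec:
  assumes q: "cmod q < 1"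
  shows "hh q (Suc (Suc N)) * (1 - q ^ (2 * (N + 2))) = hh q N"
proof -
  define M where "M = Suc (Suc N)"
  define Z where "Z k = 1 / (PP q k * PP q (Suc N - k))" for k
  define X where "X k = (1 - q ^ (2 * k)) / (PP q k * PP q (M - k))" for k
  define Y where "Y k = q ^ (2 * k) * (1 - q ^ (2 * (M - k))) / (PP q k * PP q (M - k))" for k
  have S1: "hh q M * (1 - q ^ (2 * (N + 2))) = (\<Sum>k\<le>M. (-1) ^ k * X k + (-1) ^ k * Y k)"
    unfolding hh_def sum_distrib_right
  proof (rule sum.cong[OF refl])
    fix k assume k: "k \<in> {..M}"
    have "q ^ (2 * (N + 2)) = q ^ (2 * k) * q ^ (2 * (M - k))"
      unfolding power_add[symmetric] using k by (intro arg_cong[where f="power q"]) (auto simp: M_def)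
    then show "(-1) ^ k / (PP q k * PP q (M - k)) * (1 - q ^ (2 * (N + 2))) = (-1) ^ k * X k + (-1) ^ k * Y k"
      unfolding X_def Y_def using PP_nz[OF q, of k] PP_nz[OF q, of "M - k"] by (simp add: field_simps)
  qed
  have S2: "(\<Sum>k\<le>M. (-1) ^ k * X k) = (\<Sum>k\<le>Suc N. (-1) ^ Suc k * Z k)"
  proof -
    have "(\<Sum>k\<le>M. (-1) ^ k * X k) = (-1) ^ 0 * X 0 + (\<Sum>k\<le>Suc N. (-1) ^ Suc k * X (Suc k))"
      unfolding M_def by (rule sum.atMost_Suc_shift)
    also have "(-1) ^ 0 * X 0 = 0" by (simp add: X_def)
    also have "(\<Sum>k\<le>Suc N. (-1) ^ Suc k * X (Suc k)) = (\<Sum>k\<le>Suc N. (-1) ^ Suc k * Z k)"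
    proof (rule sum.cong[OF refl])
      fix k assume "k \<in> {..Suc N}"
      have "M - Suc k = Suc N - k" by (simp add: M_def)
      then have "X (Suc k) = (1 - q ^ (2 * k + 2)) / (PP q (Suc k) * PP q (Suc N - k))"
        by (simp add: X_def)
      also have "\<dots> = Z k" unfolding Z_def by (rule PP_Suc_inv[OF q])
      finally show "(-1) ^ Suc k * X (Suc k) = (-1) ^ Suc k * Z k" by simp
    qed
    finally show ?thesis by simp
  qed
  have S3: "(\<Sum>k\<le>M. (-1) ^ k * Y k) = (\<Sum>k\<le>Suc N. (-1) ^ k * (q ^ (2 * k) * Z k))"
  proof -
    have "(\<Sum>k\<le>M. (-1) ^ k * Y k) = (\<Sum>k\<le>Suc N. (-1) ^ k * Y k) + (-1) ^ M * Y M"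
      unfolding M_def by (rule sum.atMost_Suc)
    also have "(-1) ^ M * Y M = 0" by (simp add: Y_def)
    also have "(\<Sum>k\<le>Suc N. (-1) ^ k * Y k) = (\<Sum>k\<le>Suc N. (-1) ^ k * (q ^ (2 * k) * Z k))"
    proof (rule sum.cong[OF refl])
      fix k assume k: "k \<in> {..Suc N}"
      have i1: "M - k = Suc (Suc N - k)" using k by (auto simp: M_def)
      have i2: "2 * (M - k) = 2 * (Suc N - k) + 2" using k by (auto simp: M_def)
      have "Y k = q ^ (2 * k) * ((1 - q ^ (2 * (Suc N - k) + 2)) / (PP q (Suc (Suc N - k)) * PP q k))"
        unfolding Y_def i1[symmetric] i2 by (simp add: mult_ac)
      also have "\<dots> = q ^ (2 * k) * Z k"
        unfolding PP_Suc_inv[OF q] Z_def by (simp add: mult_ac)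
      finally show "(-1) ^ k * Y k = (-1) ^ k * (q ^ (2 * k) * Z k)" by simp
    qed
    finally show ?thesis by simp
  qed
  have S4: "(\<Sum>k\<le>Suc N. (-1) ^ Suc k * Z k + (-1) ^ k * (q ^ (2 * k) * Z k)) = hh q N"
  proof -
    have "(\<Sum>k\<le>Suc N. (-1) ^ Suc k * Z k + (-1) ^ k * (q ^ (2 * k) * Z k))
        = (\<Sum>k\<le>Suc N. (-1) ^ Suc k * ((1 - q ^ (2 * k)) * Z k))"
      by (rule sum.cong[OF refl]) (simp add: algebra_simps)
    also have "\<dots> = (-1) ^ Suc 0 * ((1 - q ^ (2 * 0)) * Z 0) +
                    (\<Sum>k\<le>N. (-1) ^ Suc (Suc k) * ((1 - q ^ (2 * Suc k)) * Z (Suc k)))"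
      by (rule sum.atMost_Suc_shift)
    also have "(\<Sum>k\<le>N. (-1) ^ Suc (Suc k) * ((1 - q ^ (2 * Suc k)) * Z (Suc k)))
             = (\<Sum>k\<le>N. (-1) ^ k / (PP q k * PP q (N - k)))"
    proof (rule sum.cong[OF refl])
      fix k assume "k \<in> {..N}"
      have "(1 - q ^ (2 * Suc k)) * Z (Suc k) = (1 - q ^ (2 * k + 2)) / (PP q (Suc k) * PP q (N - k))"
        by (simp add: Z_def)
      also have "\<dots> = 1 / (PP q k * PP q (N - k))" by (rule PP_Suc_inv[OF q])
      finally show "(-1) ^ Suc (Suc k) * ((1 - q ^ (2 * Suc k)) * Z (Suc k)) = (-1) ^ k / (PP q k * PP q (N - k))"
        by simp
    qed
    finally show ?thesis by (simp add: hh_def)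
  qed
  have "hh q M * (1 - q ^ (2 * (N + 2))) = (\<Sum>k\<le>M. (-1) ^ k * X k) + (\<Sum>k\<le>M. (-1) ^ k * Y k)"
    unfolding S1 sum.distrib ..
  also have "\<dots> = hh q N" unfolding S2 S3 sum.distrib[symmetric] S4 ..
  finally show ?thesis by (simp add: M_def)
qed

lemma hh_even:
  assumes q: "cmod q < 1"
  shows "hh q (2 * n) * qpoch (q ^ 4) (q ^ 4) n = 1"
proof (induction n)
  case 0 then show ?case by (simp add: hh_def)
next
  case (Suc n)
  define c where "c = 1 - q ^ (2 * (2 * n + 2))"
  have A: "qpoch (q ^ 4) (q ^ 4) (Suc n) = qpoch (q ^ 4) (q ^ 4) n * c"
  proof -
    have "q ^ 4 * (q ^ 4) ^ n = q ^ (2 * (2 * n + 2))"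
      unfolding power_mult[symmetric] power_add[symmetric] by (rule arg_cong[where f="power q"]) simp
    then show ?thesis by (simp add: qpoch_Suc c_def)
  qed
  have B: "hh q (Suc (Suc (2 * n))) * c = hh q (2 * n)"
    using hh_rec[OF q, of "2 * n"] by (simp add: c_def)
  have "hh q (2 * Suc n) * qpoch (q ^ 4) (q ^ 4) (Suc n) = (hh q (Suc (Suc (2 * n))) * c) * qpoch (q ^ 4) (q ^ 4) n"
    unfolding A by (simp add: mult_ac)
  also have "\<dots> = 1" unfolding B by (rule Suc.IH)
  finally show ?case .
qed

lemma powi_nonneg_nat: "0 \<le> k \<Longrightarrow> (x::complex) powi k = x ^ nat k"
  by (simp add: power_int_def)

lemma Fid:
  fixes q :: complex
  assumes q: "cmod q < 1"
  shows "(\<Sum>r\<le>n. (1 - q ^ (2 * r + 1)) * (\<Sum>j = - int r..int r. (-1) powi j * q powi (int r ^ 2 - j ^ 2))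
            / (PP q (n - r) * PP q (n + r + 1)))
         = (-1) ^ n / ((1 + q ^ (2 * n + 1)) * qpoch (q ^ 4) (q ^ 4) n)"
proof -
  define D where "D r = PP q (n - r) * PP q (n + r + 1)" for r
  define G where "G r j = (-1) powi j * ((1 - q ^ (2 * r + 1)) * q ^ nat (int r ^ 2 - j ^ 2) / D r)" for r j
  have step1: "(1 - q ^ (2 * r + 1)) * (\<Sum>j = - int r..int r. (-1) powi j * q powi (int r ^ 2 - j ^ 2)) / D r
        = (\<Sum>j\<in>{j. j \<in> {- int n..int n} \<and> \<bar>j\<bar> \<le> int r}. G r j)" if r: "r \<in> {..n}" for r
  proof -
    have set: "{j. j \<in> {- int n..int n} \<and> \<bar>j\<bar> \<le> int r} = {- int r..int r}"
      using r by auto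
    have "(1 - q ^ (2 * r + 1)) * (\<Sum>j = - int r..int r. (-1) powi j * q powi (int r ^ 2 - j ^ 2)) / D r
          = (\<Sum>j = - int r..int r. (1 - q ^ (2 * r + 1)) * ((-1) powi j * q powi (int r ^ 2 - j ^ 2)) / D r)"
      by (simp add: sum_distrib_left sum_divide_distrib)
    also have "\<dots> = (\<Sum>j = - int r..int r. G r j)"
    proof (rule sum.cong[OF refl])
      fix j assume j: "j \<in> {- int r..int r}"
      have "j ^ 2 \<le> int r ^ 2"
        using j by (simp add: abs_le_square_iff[symmetric] abs_le_iff)
      then have "q powi (int r ^ 2 - j ^ 2) = q ^ nat (int r ^ 2 - j ^ 2)"
        by (intro powi_nonneg_nat) simp
      then show "(1 - q ^ (2 * r + 1)) * ((-1) powi j * q powi (int r ^ 2 - j ^ 2)) / D r = G r j"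
        by (simp add: G_def mult_ac)
    qed
    finally show ?thesis unfolding set .
  qed
  have "(\<Sum>r\<le>n. (1 - q ^ (2 * r + 1)) * (\<Sum>j = - int r..int r. (-1) powi j * q powi (int r ^ 2 - j ^ 2)) / D r)
      = (\<Sum>r\<in>{..n}. \<Sum>j\<in>{j. j \<in> {- int n..int n} \<and> \<bar>j\<bar> \<le> int r}. G r j)"
    by (rule sum.cong[OF refl]) (rule step1)
  also have "\<dots> = (\<Sum>j\<in>{- int n..int n}. \<Sum>r\<in>{r. r \<in> {..n} \<and> \<bar>j\<bar> \<le> int r}. G r j)"
    by (rule sum.swap_restrict) auto
  also have "\<dots> = (\<Sum>j\<in>{- int n..int n}. (-1) powi j / (PP q (n - nat \<bar>j\<bar>) * PP q (n + nat \<bar>j\<bar>) * (1 + q ^ (2 * n + 1))))"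
  proof (rule sum.cong[OF refl])
    fix j assume j: "j \<in> {- int n..int n}"
    define m where "m = nat \<bar>j\<bar>"
    have mn: "m \<le> n" using j by (auto simp: m_def)
    have set: "{r. r \<in> {..n} \<and> \<bar>j\<bar> \<le> int r} = {m..m + (n - m)}"
      using mn by (auto simp: m_def)
    have "(\<Sum>r\<in>{m..m + (n - m)}. G r j) = (-1) powi j *
          (\<Sum>r = m..m + (n - m). (1 - q ^ (2 * r + 1)) * q ^ (r\<^sup>2 - m\<^sup>2) / (PP q (m + (n - m) - r) * PP q (m + (n - m) + r + 1)))"
      unfolding sum_distrib_left
    proof (rule sum.cong[OF refl])
      fix r assume r: "r \<in> {m..m + (n - m)}"
      have "nat (int r ^ 2 - j ^ 2) = r\<^sup>2 - m\<^sup>2"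
      proof -
        have "j ^ 2 = int (m ^ 2)" by (simp add: m_def)
        moreover have "m ^ 2 \<le> r ^ 2" using r by (simp add: power_mono)
        moreover have "int (r ^ 2 - m ^ 2) = int r ^ 2 - int m ^ 2"
          using of_nat_diff[OF \<open>m ^ 2 \<le> r ^ 2\<close>] by simp
        ultimately have "int r ^ 2 - j ^ 2 = int (r ^ 2 - m ^ 2)" by simp
        then show ?thesis by simp
      qed
      moreover have "m + (n - m) = n" using mn by simp
      ultimately show "G r j = (-1) powi j * ((1 - q ^ (2 * r + 1)) * q ^ (r\<^sup>2 - m\<^sup>2) / (PP q (m + (n - m) - r) * PP q (m + (n - m) + r + 1)))"
        by (simp add: G_def D_def)
    qed
    also have "\<dots> = (-1) powi j * (1 / (PP q (n - m) * PP q (2 * m + (n - m)) * (1 + q ^ (2 * (m + (n - m)) + 1))))"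
      unfolding U_sum[OF q] ..
    also have "\<dots> = (-1) powi j / (PP q (n - nat \<bar>j\<bar>) * PP q (n + nat \<bar>j\<bar>) * (1 + q ^ (2 * n + 1)))"
    proof -
      have "2 * m + (n - m) = n + m" "m + (n - m) = n" using mn by simp_all
      then show ?thesis by (simp add: m_def add.commute)
    qed
    finally show "(\<Sum>r\<in>{r. r \<in> {..n} \<and> \<bar>j\<bar> \<le> int r}. G r j) = \<dots>" unfolding set .
  qed
  also have "\<dots> = (\<Sum>j\<in>{- int n..int n}. (-1) powi j / (PP q (n - nat \<bar>j\<bar>) * PP q (n + nat \<bar>j\<bar>))) / (1 + q ^ (2 * n + 1))"
    by (simp add: sum_divide_distrib mult_ac)
  also have "(\<Sum>j\<in>{- int n..int n}. (-1) powi j / (PP q (n - nat \<bar>j\<bar>) * PP q (n + nat \<bar>j\<bar>)))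
           = (\<Sum>k\<le>2 * n. (-1) ^ n * ((-1) ^ k / (PP q k * PP q (2 * n - k))))"
  proof (rule sum.reindex_bij_witness[where j = "\<lambda>j. nat (j + int n)" and i = "\<lambda>k. int k - int n"], goal_cases)
    case (1 a) then show ?case by auto
  next
    case (2 a) then show ?case by auto
  next
    case (3 b) then show ?case by auto
  next
    case (4 b) then show ?case by auto
  next
    case (5 a)
    define k where "k = nat (a + int n)"
    have k: "k \<le> 2 * n" using 5 by (auto simp: k_def)
    have ak: "a = int k - int n" using 5 by (auto simp: k_def)
    have s: "(-1::complex) powi (int k - int n) = (-1) ^ n * (-1) ^ k"
    proof -
      have "(-1::complex) powi (int k - int n) = (-1) powi int k / (-1) powi int n"
        by (rule power_int_diff) simp
      also have "\<dots> = (-1) ^ k / (-1) ^ n" by simp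
      also have "\<dots> = (-1) ^ n * (-1) ^ k"
        by (cases "even n") (simp_all add: field_simps)
      finally show ?thesis .
    qed
    have pp: "PP q (n - nat \<bar>int k - int n\<bar>) * PP q (n + nat \<bar>int k - int n\<bar>) = PP q k * PP q (2 * n - k)"
    proof (cases "k \<le> n")
      case True
      then have "nat \<bar>int k - int n\<bar> = n - k" by simp
      moreover have "n - (n - k) = k" "n + (n - k) = 2 * n - k" using True by simp_all
      ultimately show ?thesis by (simp only: mult.commute)
    next
      case False
      then have "nat \<bar>int k - int n\<bar> = k - n" by simp
      moreover have "n - (k - n) = 2 * n - k" "n + (k - n) = k" using False k by simp_all
      ultimately show ?thesis by (simp only: mult.commute)
    qed
    show ?case unfolding k_def[symmetric] ak s pp by simp
  qed
  also have "\<dots> = (-1) ^ n * hh q (2 * n)" by (simp add: hh_def sum_distrib_left)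
  also have "hh q (2 * n) = 1 / qpoch (q ^ 4) (q ^ 4) n"
  proof -
    have e: "hh q (2 * n) * qpoch (q ^ 4) (q ^ 4) n = 1" by (rule hh_even[OF q])
    then have "qpoch (q ^ 4) (q ^ 4) n \<noteq> 0" by auto
    then show ?thesis using e by (simp add: eq_divide_eq)
  qed
  finally show ?thesis by (simp add: D_def field_simps)
qed

lemma summable_sq_geom:
  fixes s :: real
  assumes s: "0 \<le> s" "s < 1"
  shows "summable (\<lambda>n. (real n + 1) ^ 2 * s ^ n)"
proof -
  define c0 where "c0 = (\<lambda>n::nat. 1::real)"
  have sm0: "summable (\<lambda>n. c0 n * x ^ n)" if "norm x < 1" for x :: real
    using that by (simp add: c0_def)
  have sm1: "summable (\<lambda>n. diffs c0 n * x ^ n)" if "norm x < 1" for x :: real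
    by (rule termdiff_converges[OF that sm0])
  have sm2: "summable (\<lambda>n. diffs (diffs c0) n * s ^ n)"
    by (rule termdiff_converges[of s 1, OF _ sm1]) (use s in auto)
  show ?thesis
  proof (rule summable_comparison_test[OF _ sm2], intro exI allI impI)
    fix n :: nat
    have d: "diffs (diffs c0) n = (real n + 1) * (real n + 2)"
      by (simp add: diffs_def c0_def algebra_simps)
    have "(real n + 1) * (real n + 1) \<le> (real n + 1) * (real n + 2)"
      by (intro mult_left_mono) auto
    then have "(real n + 1) ^ 2 \<le> diffs (diffs c0) n"
      unfolding d by (simp add: power2_eq_square)
    then show "norm ((real n + 1) ^ 2 * s ^ n) \<le> diffs (diffs c0) n * s ^ n"
      using s by (simp add: mult_right_mono)
  qed
qed

lemma row_sum:
  fixes p a c w :: complex and r :: nat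
  assumes p: "cmod p < 1" and a: "a \<noteq> 0" and c: "c \<noteq> 0"
    and nzA: "nz (p * a) p" and nzC: "nz (p * c) p" and x: "cmod (a * c) < 1"
  shows "(\<lambda>k. qpoch (p / a) p (r + k) * qpoch (p / c) p (r + k) * (a * c) ^ (r + k)
               * (w / (qpoch p p k * qpoch p p (r + k + r + 1)))) sums
         (w * (qpoch (p / a) p r * qpoch (p / c) p r) / (qpoch (p * a) p r * qpoch (p * c) p r) * (a * c) ^ r
           * (qpoch_inf (p * a) p * qpoch_inf (p * c) p / (qpoch_inf p p * qpoch_inf (a * c) p)))"
proof -
  define \<alpha> where "\<alpha> = p / a * p ^ r"
  define \<beta> where "\<beta> = p / c * p ^ r"
  define z where "z = a * c"
  have nzP: "nz p p" by (rule nz_small[OF p p])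
  have nzX: "nz z p" unfolding z_def by (rule nz_small[OF p x])
  have e: "p ^ (2 * r + 1) = p * (p ^ r * p ^ r)"
    by (simp add: power_add[symmetric] mult_2)
  have abz: "\<alpha> * \<beta> * z = p * p ^ (2 * r + 1)"
    unfolding e using a c by (simp add: \<alpha>_def \<beta>_def z_def field_simps)
  have az: "\<alpha> * z = p * c * p ^ r" using a by (simp add: \<alpha>_def z_def field_simps)
  have bz: "\<beta> * z = p * a * p ^ r" using c by (simp add: \<beta>_def z_def field_simps)
  have nzg: "nz (\<alpha> * \<beta> * z) p" unfolding abz by (rule nz_shift[OF nzP])
  have nza: "nz (\<alpha> * z) p" unfolding az by (rule nz_shift[OF nzC])
  have nzb: "nz (\<beta> * z) p" unfolding bz by (rule nz_shift[OF nzA])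
  have G: "(\<lambda>k. qpoch \<alpha> p k * qpoch \<beta> p k * z ^ k / (qpoch p p k * qpoch (\<alpha> * \<beta> * z) p k))
           sums (qpoch_inf (\<alpha> * z) p * qpoch_inf (\<beta> * z) p / (qpoch_inf (\<alpha> * \<beta> * z) p * qpoch_inf z p))"
    by (rule qgauss[OF p _ nzg nza nzb]) (use x in \<open>simp add: z_def\<close>)
  define C0 where "C0 = qpoch (p / a) p r * qpoch (p / c) p r * z ^ r * w / qpoch p p (2 * r + 1)"
  have G2: "(\<lambda>k. C0 * (qpoch \<alpha> p k * qpoch \<beta> p k * z ^ k / (qpoch p p k * qpoch (\<alpha> * \<beta> * z) p k)))
           sums (C0 * (qpoch_inf (\<alpha> * z) p * qpoch_inf (\<beta> * z) p / (qpoch_inf (\<alpha> * \<beta> * z) p * qpoch_inf z p)))"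
    by (rule sums_mult[OF G])
  have n1: "qpoch p p (2 * r + 1) \<noteq> 0" by (rule nz_qpoch[OF nzP])
  have termeq: "qpoch (p / a) p (r + k) * qpoch (p / c) p (r + k) * (a * c) ^ (r + k)
               * (w / (qpoch p p k * qpoch p p (r + k + r + 1)))
        = C0 * (qpoch \<alpha> p k * qpoch \<beta> p k * z ^ k / (qpoch p p k * qpoch (\<alpha> * \<beta> * z) p k))" for k
  proof -
    have i: "r + k + r + 1 = (2 * r + 1) + k" by simp
    have "qpoch p p (r + k + r + 1) = qpoch p p (2 * r + 1) * qpoch (\<alpha> * \<beta> * z) p k"
      unfolding i qpoch_add abz ..
    moreover have "qpoch (p / a) p (r + k) = qpoch (p / a) p r * qpoch \<alpha> p k"
      unfolding qpoch_add \<alpha>_def ..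
    moreover have "qpoch (p / c) p (r + k) = qpoch (p / c) p r * qpoch \<beta> p k"
      unfolding qpoch_add \<beta>_def ..
    ultimately show ?thesis using n1 by (simp add: C0_def z_def power_add field_simps)
  qed
  have val: "C0 * (qpoch_inf (\<alpha> * z) p * qpoch_inf (\<beta> * z) p / (qpoch_inf (\<alpha> * \<beta> * z) p * qpoch_inf z p))
      = w * (qpoch (p / a) p r * qpoch (p / c) p r) / (qpoch (p * a) p r * qpoch (p * c) p r) * (a * c) ^ r
           * (qpoch_inf (p * a) p * qpoch_inf (p * c) p / (qpoch_inf p p * qpoch_inf (a * c) p))"
  proof -
    have sA: "qpoch_inf (p * a) p = qpoch (p * a) p r * qpoch_inf (\<beta> * z) p"
      unfolding bz by (rule qpoch_inf_split[OF p nzA])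
    have sC: "qpoch_inf (p * c) p = qpoch (p * c) p r * qpoch_inf (\<alpha> * z) p"
      unfolding az by (rule qpoch_inf_split[OF p nzC])
    have sP: "qpoch_inf p p = qpoch p p (2 * r + 1) * qpoch_inf (\<alpha> * \<beta> * z) p"
      unfolding abz by (rule qpoch_inf_split[OF p nzP])
    have n2: "qpoch (p * a) p r \<noteq> 0" by (rule nz_qpoch[OF nzA])
    have n3: "qpoch (p * c) p r \<noteq> 0" by (rule nz_qpoch[OF nzC])
    have n4: "qpoch_inf (\<alpha> * \<beta> * z) p \<noteq> 0" by (rule qpoch_LIMSEQ(2)[OF p nzg])
    have n5: "qpoch_inf z p \<noteq> 0" by (rule qpoch_LIMSEQ(2)[OF p nzX])
    show ?thesis unfolding sA sC sP z_def[symmetric]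
      using n1 n2 n3 n4 n5 by (simp add: C0_def field_simps)
  qed
  show ?thesis using G2 unfolding termeq[symmetric] val .
qed

lemma Ar_bound:
  fixes q :: complex
  assumes q: "cmod q < 1"
  shows "cmod (\<Sum>j = - int r..int r. (-1) powi j * q powi (int r ^ 2 - j ^ 2)) \<le> 2 * real r + 1"
proof -
  have "cmod (\<Sum>j = - int r..int r. (-1) powi j * q powi (int r ^ 2 - j ^ 2))
        \<le> (\<Sum>j = - int r..int r. cmod ((-1) powi j * q powi (int r ^ 2 - j ^ 2)))"
    by (rule norm_sum)
  also have "\<dots> \<le> (\<Sum>j = - int r..int r. 1)"
  proof (rule sum_mono)
    fix j assume j: "j \<in> {- int r..int r}"
    have "j ^ 2 \<le> int r ^ 2"
      using j by (simp add: abs_le_square_iff[symmetric] abs_le_iff)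
    then have "q powi (int r ^ 2 - j ^ 2) = q ^ nat (int r ^ 2 - j ^ 2)"
      by (intro powi_nonneg_nat) simp
    moreover have "cmod (q ^ nat (int r ^ 2 - j ^ 2)) \<le> 1"
      using q by (simp add: norm_power power_le_one)
    moreover have "cmod ((-1::complex) powi j) = 1" by (simp add: norm_power_int)
    ultimately show "cmod ((-1) powi j * q powi (int r ^ 2 - j ^ 2)) \<le> 1"
      by (simp add: norm_mult)
  qed
  also have "\<dots> = 2 * real r + 1" by simp
  finally show ?thesis .
qed

theorem theorem8p1:
  fixes q a c :: complex
  assumes "0 < cmod q" and "cmod q < 1"
    and "a \<noteq> 0" and "c \<noteq> 0"
    and "\<And>k::nat. k \<ge> 1 \<Longrightarrow> a * q ^ (2 * k) \<noteq> 1"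
    and "\<And>k::nat. k \<ge> 1 \<Longrightarrow> c * q ^ (2 * k) \<noteq> 1"
    and "cmod (a * c) < 1"
  shows "summable (\<lambda>n. qpoch (q\<^sup>2 / a) (q\<^sup>2) n * qpoch (q\<^sup>2 / c) (q\<^sup>2) n
              / ((1 + q ^ (2 * n + 1)) * qpoch (q ^ 4) (q ^ 4) n) * (- (a * c)) ^ n)
     \<and> (\<lambda>n. (1 - q ^ (2 * n + 1))
              * (qpoch (q\<^sup>2 / a) (q\<^sup>2) n * qpoch (q\<^sup>2 / c) (q\<^sup>2) n)
              / (qpoch (q\<^sup>2 * a) (q\<^sup>2) n * qpoch (q\<^sup>2 * c) (q\<^sup>2) n)
              * (a * c) ^ n
              * (\<Sum>j = - int n..int n. (-1) powi j * q powi (int n ^ 2 - j ^ 2)))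
       sums
       (qpoch_inf (q\<^sup>2) (q\<^sup>2) * qpoch_inf (a * c) (q\<^sup>2)
          / (qpoch_inf (q\<^sup>2 * a) (q\<^sup>2) * qpoch_inf (q\<^sup>2 * c) (q\<^sup>2))
        * (\<Sum>n. qpoch (q\<^sup>2 / a) (q\<^sup>2) n * qpoch (q\<^sup>2 / c) (q\<^sup>2) n
              / ((1 + q ^ (2 * n + 1)) * qpoch (q ^ 4) (q ^ 4) n) * (- (a * c)) ^ n))"
proof -
  have q1: "cmod q < 1" by fact
  have a0: "a \<noteq> 0" and c0: "c \<noteq> 0" by fact+
  have x1: "cmod (a * c) < 1" by fact
  have p1: "cmod (q\<^sup>2) < 1"
    using q1 by (simp add: norm_power power_less_one_iff)
  have nzP: "nz (q\<^sup>2) (q\<^sup>2)" by (rule nz_small[OF p1 p1])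
  have nzA: "nz (q\<^sup>2 * a) (q\<^sup>2)"
    unfolding nz_def
  proof
    fix k
    have e1: "q\<^sup>2 * a * (q\<^sup>2) ^ k = a * (q ^ 2 * q ^ (2 * k))" by (simp add: power_mult[symmetric] mult_ac)
    have e2: "q ^ 2 * q ^ (2 * k) = q ^ (2 * Suc k)"
      unfolding power_add[symmetric] by (rule arg_cong[where f="power q"]) simp
    show "q\<^sup>2 * a * (q\<^sup>2) ^ k \<noteq> 1" unfolding e1 e2 by (rule assms(5)) simp
  qed
  have nzC: "nz (q\<^sup>2 * c) (q\<^sup>2)"
    unfolding nz_def
  proof
    fix k
    have e1: "q\<^sup>2 * c * (q\<^sup>2) ^ k = c * (q ^ 2 * q ^ (2 * k))" by (simp add: power_mult[symmetric] mult_ac)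
    have e2: "q ^ 2 * q ^ (2 * k) = q ^ (2 * Suc k)"
      unfolding power_add[symmetric] by (rule arg_cong[where f="power q"]) simp
    show "q\<^sup>2 * c * (q\<^sup>2) ^ k \<noteq> 1" unfolding e1 e2 by (rule assms(6)) simp
  qed
  have nzX: "nz (a * c) (q\<^sup>2)" by (rule nz_small[OF p1 x1])
  define Ar where "Ar r = (\<Sum>j = - int r..int r. (-1) powi j * q powi (int r ^ 2 - j ^ 2))" for r
  define g where "g n r = qpoch (q\<^sup>2 / a) (q\<^sup>2) n * qpoch (q\<^sup>2 / c) (q\<^sup>2) n * (a * c) ^ n
      * ((1 - q ^ (2 * r + 1)) * Ar r / (PP q (n - r) * PP q (n + r + 1)))" for n r
  define S where "S n = qpoch (q\<^sup>2 / a) (q\<^sup>2) n * qpoch (q\<^sup>2 / c) (q\<^sup>2) n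
              / ((1 + q ^ (2 * n + 1)) * qpoch (q ^ 4) (q ^ 4) n) * (- (a * c)) ^ n" for n
  define L where "L n = (1 - q ^ (2 * n + 1))
              * (qpoch (q\<^sup>2 / a) (q\<^sup>2) n * qpoch (q\<^sup>2 / c) (q\<^sup>2) n)
              / (qpoch (q\<^sup>2 * a) (q\<^sup>2) n * qpoch (q\<^sup>2 * c) (q\<^sup>2) n)
              * (a * c) ^ n * Ar n" for n
  define Kc where "Kc = qpoch_inf (q\<^sup>2 * a) (q\<^sup>2) * qpoch_inf (q\<^sup>2 * c) (q\<^sup>2)
                        / (qpoch_inf (q\<^sup>2) (q\<^sup>2) * qpoch_inf (a * c) (q\<^sup>2))"
  have Kc0: "Kc \<noteq> 0"
    using qpoch_LIMSEQ(2)[OF p1 nzA] qpoch_LIMSEQ(2)[OF p1 nzC] qpoch_LIMSEQ(2)[OF p1 nzP]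
      qpoch_LIMSEQ(2)[OF p1 nzX] by (simp add: Kc_def)
  \<comment> \<open>Step 1: the finite Bailey pair identity\<close>
  have Sg: "S n = (\<Sum>r\<le>n. g n r)" for n
  proof -
    have "(\<Sum>r\<le>n. g n r) = qpoch (q\<^sup>2 / a) (q\<^sup>2) n * qpoch (q\<^sup>2 / c) (q\<^sup>2) n * (a * c) ^ n
        * (\<Sum>r\<le>n. (1 - q ^ (2 * r + 1)) * Ar r / (PP q (n - r) * PP q (n + r + 1)))"
      by (simp add: g_def sum_distrib_left)
    also have "(\<Sum>r\<le>n. (1 - q ^ (2 * r + 1)) * Ar r / (PP q (n - r) * PP q (n + r + 1)))
             = (-1) ^ n / ((1 + q ^ (2 * n + 1)) * qpoch (q ^ 4) (q ^ 4) n)"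
      unfolding Ar_def by (rule Fid[OF q1])
    finally show ?thesis by (simp add: S_def power_minus[of "a * c"] mult_ac power_mult_distrib)
  qed
  obtain Cp where Cp: "Cp > 0" "\<And>n. cmod (inverse (qpoch (q\<^sup>2) (q\<^sup>2) n)) \<le> Cp"
    using qpoch_inv_bound[OF p1 nzP] by blast
  define E1 where "E1 = exp (cmod (q\<^sup>2 / a) / (1 - cmod (q\<^sup>2)))"
  define E2 where "E2 = exp (cmod (q\<^sup>2 / c) / (1 - cmod (q\<^sup>2)))"
  define B where "B = E1 * E2 * 4 * (Cp * Cp)"
  have gbound: "cmod (g n r) \<le> B * (real n + 1) * cmod (a * c) ^ n" if r: "r \<le> n" for n r
  proof -
    have t1: "cmod (1 - q ^ (2 * r + 1)) \<le> 2"
    proof -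
      have "cmod (1 - q ^ (2 * r + 1)) \<le> 1 + cmod (q ^ (2 * r + 1))" using norm_triangle_ineq4[of 1 "q ^ (2 * r + 1)"] by simp
      also have "cmod (q ^ (2 * r + 1)) \<le> 1" unfolding norm_power using q1 by (intro power_le_one) auto
      finally show ?thesis by simp
    qed
    have t2: "cmod (Ar r) \<le> 2 * (real n + 1)"
      using Ar_bound[OF q1, of r] r unfolding Ar_def by simp
    have "cmod (g n r) = cmod (qpoch (q\<^sup>2 / a) (q\<^sup>2) n) * cmod (qpoch (q\<^sup>2 / c) (q\<^sup>2) n) * cmod (a * c) ^ n
          * (cmod (1 - q ^ (2 * r + 1)) * cmod (Ar r) * (cmod (inverse (qpoch (q\<^sup>2) (q\<^sup>2) (n - r))) * cmod (inverse (qpoch (q\<^sup>2) (q\<^sup>2) (n + r + 1)))))"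
      by (simp add: g_def PP_def norm_mult norm_divide norm_power divide_inverse norm_inverse mult_ac)
    also have "\<dots> \<le> E1 * E2 * cmod (a * c) ^ n * (2 * (2 * (real n + 1)) * (Cp * Cp))"
      using Cp(1) by (intro mult_mono t1 t2 Cp(2)) (auto simp: E1_def E2_def intro: qpoch_bound[OF p1])
    also have "\<dots> = B * (real n + 1) * cmod (a * c) ^ n" by (simp add: B_def mult_ac)
    finally show ?thesis .
  qed
  have B0: "0 \<le> B" using Cp(1) by (simp add: B_def E1_def E2_def)
  have rowbound: "(\<Sum>r\<le>n. cmod (g n r)) \<le> B * (real n + 1) ^ 2 * cmod (a * c) ^ n" for n
  proof -
    have "(\<Sum>r\<le>n. cmod (g n r)) \<le> (\<Sum>r\<le>n. B * (real n + 1) * cmod (a * c) ^ n)"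
      by (rule sum_mono) (rule gbound, simp)
    also have "\<dots> = B * (real n + 1) ^ 2 * cmod (a * c) ^ n"
      by (simp add: power2_eq_square mult_ac)
    finally show ?thesis .
  qed
  have summ_rows: "summable (\<lambda>n. B * (real n + 1) ^ 2 * cmod (a * c) ^ n)"
    using summable_mult[OF summable_sq_geom[of "cmod (a * c)"], of B] x1 by (simp add: mult_ac)
  define f where "f = (\<lambda>(n, r). g n r)"
  have fabs: "(\<lambda>x. norm (f x)) summable_on Sigma UNIV (\<lambda>n. {..n})"
  proof (subst Infinite_Sum.abs_summable_on_Sigma_iff, intro conjI ballI)
    fix n :: nat
    show "(\<lambda>r. norm (f (n, r))) summable_on {..n}" by simp
  next
    have "(\<lambda>n. norm (infsum (\<lambda>r. norm (f (n, r))) {..n})) summable_on UNIV"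
    proof (rule norm_summable_imp_summable_on)
      show "summable (\<lambda>n. norm (norm (infsum (\<lambda>r. norm (f (n, r))) {..n})))"
      proof (rule summable_comparison_test[OF _ summ_rows], intro exI allI impI)
        fix n :: nat
        have "norm (norm (infsum (\<lambda>r. norm (f (n, r))) {..n})) = (\<Sum>r\<le>n. cmod (g n r))"
          by (simp add: f_def sum_nonneg)
        then show "norm (norm (norm (infsum (\<lambda>r. norm (f (n, r))) {..n}))) \<le> B * (real n + 1)\<^sup>2 * cmod (a * c) ^ n"
          using rowbound[of n] by simp
      qed
    qed
    then show "(\<lambda>n. norm (infsum (\<lambda>r. norm (f (n, r))) {..n})) summable_on UNIV" .
  qed
  have fsum: "f summable_on Sigma UNIV (\<lambda>n. {..n})"
    using fabs summable_on_iff_abs_summable_on_complex by blast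
  define H where "H = infsum f (Sigma UNIV (\<lambda>n. {..n}))"
  have fH: "(f has_sum H) (Sigma UNIV (\<lambda>n. {..n}))"
    unfolding H_def by (rule has_sum_infsum[OF fsum])
  have SH: "S sums H"
  proof -
    have "((\<lambda>n. \<Sum>r\<le>n. g n r) has_sum H) UNIV"
      by (rule has_sum_Sigma'[OF fH]) (simp add: f_def)
    then show ?thesis unfolding Sg[symmetric] by (rule has_sum_imp_sums)
  qed
  have bij: "bij_betw (\<lambda>(r::nat, k::nat). (r + k, r)) (UNIV \<times> UNIV) (Sigma UNIV (\<lambda>n. {..n}))"
    by (rule bij_betw_byWitness[where f' = "\<lambda>(n, r). (r, n - r)"]) auto
  have fH2: "((\<lambda>(r, k). g (r + k) r) has_sum H) (UNIV \<times> UNIV)"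
    using has_sum_reindex_bij_betw[OF bij, of f H] fH by (simp add: f_def case_prod_unfold)
  have rows: "((\<lambda>k. g (r + k) r) has_sum (L r * Kc)) UNIV" for r
  proof -
    have "(\<lambda>(r, k). g (r + k) r) summable_on Sigma UNIV (\<lambda>_. UNIV)"
      using fH2 by (auto simp: summable_on_def)
    then have sm: "(\<lambda>k. g (r + k) r) summable_on UNIV"
      using summable_on_SigmaD1[of "\<lambda>r k. g (r + k) r" UNIV "\<lambda>_. UNIV" r] by simp
    have hs: "((\<lambda>k. g (r + k) r) has_sum (infsum (\<lambda>k. g (r + k) r) UNIV)) UNIV"
      by (rule has_sum_infsum[OF sm])
    have rs: "(\<lambda>k. g (r + k) r) sums (L r * Kc)"
    proof -
      have "(\<lambda>k. qpoch (q\<^sup>2 / a) (q\<^sup>2) (r + k) * qpoch (q\<^sup>2 / c) (q\<^sup>2) (r + k) * (a * c) ^ (r + k)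
               * (((1 - q ^ (2 * r + 1)) * Ar r) / (qpoch (q\<^sup>2) (q\<^sup>2) k * qpoch (q\<^sup>2) (q\<^sup>2) (r + k + r + 1)))) sums
         (((1 - q ^ (2 * r + 1)) * Ar r) * (qpoch (q\<^sup>2 / a) (q\<^sup>2) r * qpoch (q\<^sup>2 / c) (q\<^sup>2) r)
            / (qpoch (q\<^sup>2 * a) (q\<^sup>2) r * qpoch (q\<^sup>2 * c) (q\<^sup>2) r) * (a * c) ^ r
           * (qpoch_inf (q\<^sup>2 * a) (q\<^sup>2) * qpoch_inf (q\<^sup>2 * c) (q\<^sup>2) / (qpoch_inf (q\<^sup>2) (q\<^sup>2) * qpoch_inf (a * c) (q\<^sup>2))))"
        by (rule row_sum[OF p1 a0 c0 nzA nzC x1])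
      moreover have "g (r + k) r = qpoch (q\<^sup>2 / a) (q\<^sup>2) (r + k) * qpoch (q\<^sup>2 / c) (q\<^sup>2) (r + k) * (a * c) ^ (r + k)
               * (((1 - q ^ (2 * r + 1)) * Ar r) / (qpoch (q\<^sup>2) (q\<^sup>2) k * qpoch (q\<^sup>2) (q\<^sup>2) (r + k + r + 1)))" for k
        by (simp add: g_def PP_def)
      moreover have "((1 - q ^ (2 * r + 1)) * Ar r) * (qpoch (q\<^sup>2 / a) (q\<^sup>2) r * qpoch (q\<^sup>2 / c) (q\<^sup>2) r)
            / (qpoch (q\<^sup>2 * a) (q\<^sup>2) r * qpoch (q\<^sup>2 * c) (q\<^sup>2) r) * (a * c) ^ r
           * (qpoch_inf (q\<^sup>2 * a) (q\<^sup>2) * qpoch_inf (q\<^sup>2 * c) (q\<^sup>2) / (qpoch_inf (q\<^sup>2) (q\<^sup>2) * qpoch_inf (a * c) (q\<^sup>2)))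
           = L r * Kc"
        by (simp add: L_def Kc_def mult_ac)
      ultimately show ?thesis by simp
    qed
    have "infsum (\<lambda>k. g (r + k) r) UNIV = L r * Kc"
      using sums_unique2[OF has_sum_imp_sums[OF hs] rs] .
    then show ?thesis using hs by simp
  qed
  have LH: "(\<lambda>r. L r * Kc) sums H"
  proof -
    have "((\<lambda>r. L r * Kc) has_sum H) UNIV"
      by (rule has_sum_Sigma'[OF fH2]) (use rows in simp)
    then show ?thesis by (rule has_sum_imp_sums)
  qed
  have L_sums: "L sums (H / Kc)"
    using sums_divide[OF LH, of Kc] Kc0 by simp
  have Hval: "H = (\<Sum>n. S n)" using SH by (simp add: sums_iff)
  have final: "H / Kc = qpoch_inf (q\<^sup>2) (q\<^sup>2) * qpoch_inf (a * c) (q\<^sup>2)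
          / (qpoch_inf (q\<^sup>2 * a) (q\<^sup>2) * qpoch_inf (q\<^sup>2 * c) (q\<^sup>2)) * (\<Sum>n. S n)"
    using qpoch_LIMSEQ(2)[OF p1 nzA] qpoch_LIMSEQ(2)[OF p1 nzC] qpoch_LIMSEQ(2)[OF p1 nzP]
      qpoch_LIMSEQ(2)[OF p1 nzX] by (simp add: Kc_def Hval field_simps)
  have "summable S" using SH by (rule sums_summable)
  moreover have "L sums (qpoch_inf (q\<^sup>2) (q\<^sup>2) * qpoch_inf (a * c) (q\<^sup>2)
          / (qpoch_inf (q\<^sup>2 * a) (q\<^sup>2) * qpoch_inf (q\<^sup>2 * c) (q\<^sup>2)) * (\<Sum>n. S n))"
    using L_sums final by simp
  ultimately show ?thesis unfolding S_def L_def Ar_def by simp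
qed

end
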